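(* The morphism $\pi_N:\mathcal M(N,K)\to L^-\mathrm{GL}_K$, $(B,\psi,\overline\psi)\mapsto1+\overline\psi(z-\widetilde B/2)^{-1}\psi$, is Poisson.
   Context: $\mathcal M(N,K)=\mathrm{Rep}(N,K)/\!/\mathrm{GL}_N$, with $\mathrm{Rep}(N,K)$ the triples $(B,\psi,\overline\psi)$, $B\in\mathrm{Mat}_{N\times N}(\mathbb C)$, $\psi\in\mathrm{Mat}_{N\times K}$, $\overline\psi\in\mathrm{Mat}_{K\times N}$, and $g\cdot(B,\psi,\overline\psi)=(gBg^{-1},g\psi,\overline\psi g^{-1})$; its Poisson structure is induced from $\{\psi_{ia},\overline\psi_{bj}\}=\delta_{ab}\delta_{ij}$, $\{B_{mn},B_{pq}\}=\delta_{np}\sum_a\overline\psi_{aq}\psi_{ma}-\delta_{mq}\sum_a\overline\psi_{an}\psi_{pa}$, $\{B_{mn},\psi_{ia}\}=\{B_{mn},\overline\psi_{bj}\}=0$ (commuting variables). $\widetilde B=B+\psi\overline\psi$ and $(z-\widetilde B/2)^{-1}$ is expanded as a power series in $z^{-1}$. $L^-\mathrm{GL}_K$ is the group of series $1+\sum_{i\ge1}g_iz^{-i}$, $g_i\in\mathfrak{gl}_K$; $T^{(n)}_{ab}$ is the $(a,b)$ entry of $g_{n+1}$, $T^{(-1)}_{ab}=\delta_{ab}$, $T_{ab}(u)=\sum_{i\ge-1}T^{(i)}_{ab}u^{-i-1}$, and its Poisson structure is $(u-v)\{T_{ab}(u),T_{cd}(v)\}=T_{ad}(v)T_{cb}(u)-T_{ad}(u)T_{cb}(v)$.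 *)

theory Defs
  imports "HOL-Analysis.Analysis"
begin

text \<open>Coordinates on Rep(N,K): B_{mn} (m,n<N), psi_{ia} (i<N, a<K), psibar_{bj} (b<K, j<N).
A point of Rep(N,K) is a valuation of these coordinates.\<close>

datatype var = VB nat nat | VPsi nat nat | VPsibar nat nat

definition vars :: "nat \<Rightarrow> nat \<Rightarrow> var set" where
  "vars N K = (\<lambda>(m,n). VB m n) ` ({..<N} \<times> {..<N})
            \<union> (\<lambda>(i,a). VPsi i a) ` ({..<N} \<times> {..<K})
            \<union> (\<lambda>(b,j). VPsibar b j) ` ({..<K} \<times> {..<N})"

type_synonym point = "var \<Rightarrow> complex"

definition Bm :: "point \<Rightarrow> nat \<Rightarrow> nat \<Rightarrow> complex" where "Bm p m n = p (VB m n)"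
definition Psi :: "point \<Rightarrow> nat \<Rightarrow> nat \<Rightarrow> complex" where "Psi p i a = p (VPsi i a)"
definition Psibar :: "point \<Rightarrow> nat \<Rightarrow> nat \<Rightarrow> complex" where "Psibar p b j = p (VPsibar b j)"

definition pd :: "var \<Rightarrow> (point \<Rightarrow> complex) \<Rightarrow> point \<Rightarrow> complex" where
  "pd v f p = deriv (\<lambda>t. f (p(v := t))) (p v)"

fun PiRep :: "nat \<Rightarrow> nat \<Rightarrow> var \<Rightarrow> var \<Rightarrow> point \<Rightarrow> complex" where
  "PiRep N K (VPsi i a) (VPsibar b j) p = (if a = b \<and> i = j then 1 else 0)"
| "PiRep N K (VPsibar b j) (VPsi i a) p = - (if a = b \<and> i = j then 1 else 0)"
| "PiRep N K (VB m n) (VB p' q) p =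
     (if n = p' then (\<Sum>a<K. Psibar p a q * Psi p m a) else 0)
   - (if m = q then (\<Sum>a<K. Psibar p a n * Psi p p' a) else 0)"
| "PiRep N K _ _ p = 0"

definition pbr :: "nat \<Rightarrow> nat \<Rightarrow> (point \<Rightarrow> complex) \<Rightarrow> (point \<Rightarrow> complex) \<Rightarrow> point \<Rightarrow> complex" where
  "pbr N K f g p = (\<Sum>v\<in>vars N K. \<Sum>w\<in>vars N K. pd v f p * PiRep N K v w p * pd w g p)"

definition mmul :: "nat \<Rightarrow> (nat \<Rightarrow> nat \<Rightarrow> complex) \<Rightarrow> (nat \<Rightarrow> nat \<Rightarrow> complex) \<Rightarrow> nat \<Rightarrow> nat \<Rightarrow> complex" where
  "mmul N A C i j = (\<Sum>k<N. A i k * C k j)"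

fun mpow :: "nat \<Rightarrow> (nat \<Rightarrow> nat \<Rightarrow> complex) \<Rightarrow> nat \<Rightarrow> nat \<Rightarrow> nat \<Rightarrow> complex" where
  "mpow N A 0 = (\<lambda>i j. if i = j then 1 else 0)"
| "mpow N A (Suc n) = mmul N (mpow N A n) A"

definition Btilde :: "nat \<Rightarrow> point \<Rightarrow> nat \<Rightarrow> nat \<Rightarrow> complex" where
  "Btilde K p i j = Bm p i j + (\<Sum>a<K. Psi p i a * Psibar p a j)"

text \<open>Pullback along pi_N of the coordinate T^{(n)}_{ab} of L^-GL_K:
  the coefficient of z^{-n-1} in 1 + psibar (z - Btilde/2)^{-1} psi, where
  (z - A)^{-1} = sum_{n>=0} A^n z^{-n-1}.  T^{(-1)}_{ab} = delta_{ab}; for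
  n < -1 the coefficient is 0 (convention for the coefficient comparison).\<close>
definition Tpull :: "nat \<Rightarrow> nat \<Rightarrow> int \<Rightarrow> nat \<Rightarrow> nat \<Rightarrow> point \<Rightarrow> complex" where
  "Tpull N K n a b p =
     (if n < -1 then 0
      else if n = -1 then (if a = b then 1 else 0)
      else (\<Sum>i<N. \<Sum>j<N. Psibar p a i * mpow N (\<lambda>k l. Btilde K p k l / 2) (nat n) i j * Psi p j b))"

end

theory Submission
  imports Defs
begin


definition sm :: "(point \<Rightarrow> complex) \<Rightarrow> bool" where
  "sm f \<longleftrightarrow> (\<forall>p v. (\<lambda>t. f (p(v := t))) field_differentiable at (p v))"

lemma sm_const[simp]: "sm (\<lambda>p. c)"
  unfolding sm_def by simp

lemma sm_coord[simp]: "sm (\<lambda>p. p w)"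
proof -
  have "(\<lambda>t. (p(v := t)) w) field_differentiable at (p v)" for p v
  proof (cases "v = w")
    case True then show ?thesis by simp
  next
    case False then show ?thesis by simp
  qed
  then show ?thesis unfolding sm_def by blast
qed

lemma sm_add[simp]: "sm f \<Longrightarrow> sm g \<Longrightarrow> sm (\<lambda>p. f p + g p)"
  unfolding sm_def by (auto intro: field_differentiable_add)

lemma sm_diff[simp]: "sm f \<Longrightarrow> sm g \<Longrightarrow> sm (\<lambda>p. f p - g p)"
  unfolding sm_def by (auto intro: field_differentiable_diff)

lemma sm_mult[simp]: "sm f \<Longrightarrow> sm g \<Longrightarrow> sm (\<lambda>p. f p * g p)"
  unfolding sm_def by (auto intro: field_differentiable_mult)

lemma sm_divc[simp]: "sm f \<Longrightarrow> sm (\<lambda>p. f p / c)"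
proof -
  assume "sm f"
  then have "sm (\<lambda>p. f p * (1 / c))" by (intro sm_mult) auto
  then show ?thesis by simp
qed

lemma sm_sum[simp]: "(\<And>i. i \<in> A \<Longrightarrow> sm (f i)) \<Longrightarrow> sm (\<lambda>p. \<Sum>i\<in>A. f i p)"
  unfolding sm_def by (auto intro!: field_differentiable_sum)

lemma smD: "sm f \<Longrightarrow> (\<lambda>t. f (p(v := t))) field_differentiable at (p v)"
  unfolding sm_def by blast

lemma pd_const[simp]: "pd v (\<lambda>p. c) p = 0"
  unfolding pd_def by simp

lemma pd_coord: "pd v (\<lambda>p. p w) p = (if v = w then 1 else 0)"
  unfolding pd_def by (cases "v = w") simp_all

lemma pd_add: "sm f \<Longrightarrow> sm g \<Longrightarrow> pd v (\<lambda>p. f p + g p) p = pd v f p + pd v g p"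
  unfolding pd_def by (simp add: smD)

lemma pd_mult: "sm f \<Longrightarrow> sm g \<Longrightarrow> pd v (\<lambda>p. f p * g p) p = pd v f p * g p + f p * pd v g p"
  unfolding pd_def by (simp add: smD)

lemma pd_cmult: "sm f \<Longrightarrow> pd v (\<lambda>p. c * f p) p = c * pd v f p"
  using pd_mult[of "\<lambda>p. c" f v p] by simp

lemma pd_sum: "(\<And>i. i \<in> A \<Longrightarrow> sm (f i)) \<Longrightarrow> pd v (\<lambda>p. \<Sum>i\<in>A. f i p) p = (\<Sum>i\<in>A. pd v (f i) p)"
proof (induction A rule: infinite_finite_induct)
  case (insert x F)
  have "pd v (\<lambda>p. \<Sum>i\<in>insert x F. f i p) p = pd v (\<lambda>p. f x p + (\<Sum>i\<in>F. f i p)) p"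
    using insert by simp
  also have "\<dots> = pd v (f x) p + pd v (\<lambda>p. \<Sum>i\<in>F. f i p) p"
    using insert by (intro pd_add) auto
  finally show ?case using insert by simp
qed simp_all

lemma PiRep_antisym: "PiRep N K w v p = - PiRep N K v w p"
  by (cases v; cases w) simp_all

lemma finite_vars[simp]: "finite (vars N K)"
  unfolding vars_def by simp

lemma pbr_antisym: "pbr N K g f p = - pbr N K f g p"
proof -
  have e: "pd v g p * PiRep N K v w p * pd w f p = - (pd w f p * PiRep N K w v p * pd v g p)" for v w
  proof -
    have "PiRep N K w v p = - PiRep N K v w p" by (rule PiRep_antisym)
    then show ?thesis by simp
  qed
  have "pbr N K g f p = (\<Sum>w\<in>vars N K. \<Sum>v\<in>vars N K. pd v g p * PiRep N K v w p * pd w f p)"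
    unfolding pbr_def by (rule sum.swap)
  also have "\<dots> = (\<Sum>w\<in>vars N K. \<Sum>v\<in>vars N K. - (pd w f p * PiRep N K w v p * pd v g p))"
    by (intro sum.cong refl) (rule e)
  also have "\<dots> = - pbr N K f g p"
    unfolding pbr_def by (simp add: sum_negf)
  finally show ?thesis .
qed

lemma pbr_add_left[simp]: "sm f \<Longrightarrow> sm g \<Longrightarrow> pbr N K (\<lambda>p. f p + g p) h p = pbr N K f h p + pbr N K g h p"
  unfolding pbr_def by (simp add: pd_add ring_distribs sum.distrib)

lemma pbr_diff_left[simp]: "sm f \<Longrightarrow> sm g \<Longrightarrow> pbr N K (\<lambda>p. f p - g p) h p = pbr N K f h p - pbr N K g h p"
proof -
  assume a: "sm f" "sm g"
  have "pd v (\<lambda>p. f p - g p) p = pd v f p - pd v g p" for v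
    using pd_add[of f "\<lambda>p. - g p" v p] pd_cmult[of g v "-1" p] a
    by (simp add: sm_def field_differentiable_minus)
  then show ?thesis unfolding pbr_def by (simp add: ring_distribs sum_subtractf)
qed

lemma pbr_mult_left[simp]: "sm f \<Longrightarrow> sm g \<Longrightarrow> pbr N K (\<lambda>p. f p * g p) h p = f p * pbr N K g h p + g p * pbr N K f h p"
  unfolding pbr_def by (simp add: pd_mult ring_distribs sum.distrib sum_distrib_left mult_ac)

lemma pbr_const_left[simp]: "pbr N K (\<lambda>p. c) h p = 0"
  unfolding pbr_def by simp

lemma pbr_div_left[simp]: "sm f \<Longrightarrow> pbr N K (\<lambda>p. f p / c) h p = pbr N K f h p / c"
proof -
  assume "sm f"
  then have "pd v (\<lambda>p. f p / c) p = pd v f p / c" for v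
    unfolding pd_def by (simp add: smD deriv_cdivide_right)
  then show ?thesis unfolding pbr_def by (simp add: sum_divide_distrib)
qed

lemma pbr_sum_left[simp]: "(\<And>i. i \<in> A \<Longrightarrow> sm (f i)) \<Longrightarrow>
   pbr N K (\<lambda>p. \<Sum>i\<in>A. f i p) h p = (\<Sum>i\<in>A. pbr N K (f i) h p)"
proof (induction A rule: infinite_finite_induct)
  case (insert x F)
  have "pbr N K (\<lambda>p. \<Sum>i\<in>insert x F. f i p) h p = pbr N K (\<lambda>p. f x p + (\<Sum>i\<in>F. f i p)) h p"
    using insert by simp
  also have "\<dots> = pbr N K (f x) h p + pbr N K (\<lambda>p. \<Sum>i\<in>F. f i p) h p"
    using insert by (intro pbr_add_left) auto
  finally show ?case using insert by simp
qed simp_all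

lemma pbr_add_right[simp]: "sm f \<Longrightarrow> sm g \<Longrightarrow> pbr N K h (\<lambda>p. f p + g p) p = pbr N K h f p + pbr N K h g p"
  by (subst pbr_antisym) (simp add: pbr_antisym[of N K h])

lemma pbr_diff_right[simp]: "sm f \<Longrightarrow> sm g \<Longrightarrow> pbr N K h (\<lambda>p. f p - g p) p = pbr N K h f p - pbr N K h g p"
  by (subst pbr_antisym) (simp add: pbr_antisym[of N K h])

lemma pbr_mult_right[simp]: "sm f \<Longrightarrow> sm g \<Longrightarrow> pbr N K h (\<lambda>p. f p * g p) p = f p * pbr N K h g p + g p * pbr N K h f p"
  by (subst pbr_antisym) (simp add: pbr_antisym[of N K h])

lemma pbr_const_right[simp]: "pbr N K h (\<lambda>p. c) p = 0"
  by (subst pbr_antisym) simp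

lemma pbr_div_right[simp]: "sm f \<Longrightarrow> pbr N K h (\<lambda>p. f p / c) p = pbr N K h f p / c"
  by (subst pbr_antisym) (simp add: pbr_antisym[of N K h])

lemma pbr_sum_right[simp]: "(\<And>i. i \<in> A \<Longrightarrow> sm (f i)) \<Longrightarrow>
   pbr N K h (\<lambda>p. \<Sum>i\<in>A. f i p) p = (\<Sum>i\<in>A. pbr N K h (f i) p)"
  by (subst pbr_antisym) (simp add: pbr_antisym[of N K h] sum_negf)

lemma pbr_coord: "pbr N K (\<lambda>p. p v) (\<lambda>p. p w) p = (if v \<in> vars N K \<and> w \<in> vars N K then PiRep N K v w p else 0)"
proof -
  have e: "pd v' (\<lambda>p. p v) p * PiRep N K v' w' p * pd w' (\<lambda>p. p w) p =
     (if w' = w then (if v' = v then PiRep N K v w p else 0) else 0)" for v' w'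
    by (simp add: pd_coord)
  show ?thesis unfolding pbr_def e by (cases "w \<in> vars N K") (simp_all add: sum.delta)
qed

lemma sm_Psi[simp]: "sm (\<lambda>p. Psi p i a)" unfolding Psi_def by simp
lemma sm_Psibar[simp]: "sm (\<lambda>p. Psibar p i a)" unfolding Psibar_def by simp
lemma sm_Bm[simp]: "sm (\<lambda>p. Bm p i a)" unfolding Bm_def by simp

lemma VPsi_vars[simp]: "VPsi i a \<in> vars N K \<longleftrightarrow> i < N \<and> a < K" unfolding vars_def by auto
lemma VPsibar_vars[simp]: "VPsibar i a \<in> vars N K \<longleftrightarrow> i < K \<and> a < N" unfolding vars_def by auto
lemma VB_vars[simp]: "VB i a \<in> vars N K \<longleftrightarrow> i < N \<and> a < N" unfolding vars_def by auto

lemma br_PQ[simp]: "pbr N K (\<lambda>p. Psi p i a) (\<lambda>p. Psibar p b j) p = (if i < N \<and> a < K \<and> b < K \<and> j < N \<and> a = b \<and> i = j then 1 else 0)"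
  unfolding Psi_def Psibar_def by (simp add: pbr_coord)
lemma br_QP[simp]: "pbr N K (\<lambda>p. Psibar p b j) (\<lambda>p. Psi p i a) p = (if i < N \<and> a < K \<and> b < K \<and> j < N \<and> a = b \<and> i = j then -1 else 0)"
  unfolding Psi_def Psibar_def by (simp add: pbr_coord)
lemma br_PP[simp]: "pbr N K (\<lambda>p. Psi p i a) (\<lambda>p. Psi p j b) p = 0"
  unfolding Psi_def Psibar_def by (simp add: pbr_coord)
lemma br_QQ[simp]: "pbr N K (\<lambda>p. Psibar p i a) (\<lambda>p. Psibar p j b) p = 0"
  unfolding Psi_def Psibar_def by (simp add: pbr_coord)
lemma br_BP[simp]: "pbr N K (\<lambda>p. Bm p i a) (\<lambda>p. Psi p j b) p = 0"
  unfolding Psi_def Bm_def by (simp add: pbr_coord)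
lemma br_BQ[simp]: "pbr N K (\<lambda>p. Bm p i a) (\<lambda>p. Psibar p j b) p = 0"
  unfolding Bm_def Psibar_def by (simp add: pbr_coord)
lemma br_PB[simp]: "pbr N K (\<lambda>p. Psi p j b) (\<lambda>p. Bm p i a) p = 0"
  unfolding Psi_def Bm_def by (simp add: pbr_coord)
lemma br_QB[simp]: "pbr N K (\<lambda>p. Psibar p j b) (\<lambda>p. Bm p i a) p = 0"
  unfolding Bm_def Psibar_def by (simp add: pbr_coord)
lemma br_BB: "m < N \<Longrightarrow> n < N \<Longrightarrow> p' < N \<Longrightarrow> q < N \<Longrightarrow> pbr N K (\<lambda>p. Bm p m n) (\<lambda>p. Bm p p' q) p =
     (if n = p' then (\<Sum>a<K. Psibar p a q * Psi p m a) else 0)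
   - (if m = q then (\<Sum>a<K. Psibar p a n * Psi p p' a) else 0)"
  unfolding Bm_def by (simp add: pbr_coord Psi_def Psibar_def)



lemma mult_if0_right: "(x::complex) * (if P then y else 0) = (if P then x * y else 0)" by simp
lemma mult_if0_left: "(if P then y else 0) * (x::complex) = (if P then y * x else 0)" by simp
lemmas delta_simps = mult_if0_right mult_if0_left sum.delta sum.delta'

lemma sm_Bt[simp]: "sm (\<lambda>p. Btilde K p m n / 2)"
  unfolding Btilde_def by simp

lemma br_XP: "m < N \<Longrightarrow> n < N \<Longrightarrow> i < N \<Longrightarrow> a < K \<Longrightarrow>
  pbr N K (\<lambda>p. Btilde K p m n / 2) (\<lambda>p. Psi p i a) p = (if n = i then - Psi p m a / 2 else 0)"
  unfolding Btilde_def by (simp add: if_distrib if_distribR sum.delta cong: if_cong)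

lemma br_XQ: "m < N \<Longrightarrow> n < N \<Longrightarrow> j < N \<Longrightarrow> b < K \<Longrightarrow>
  pbr N K (\<lambda>p. Btilde K p m n / 2) (\<lambda>p. Psibar p b j) p = (if m = j then Psibar p b n / 2 else 0)"
  unfolding Btilde_def by (simp add: if_distrib if_distribR sum.delta cong: if_cong)

lemma br_PhiPhi: "m < N \<Longrightarrow> n < N \<Longrightarrow> k < N \<Longrightarrow> l < N \<Longrightarrow>
  pbr N K (\<lambda>p. \<Sum>c<K. Psi p m c * Psibar p c n) (\<lambda>p. \<Sum>e<K. Psi p k e * Psibar p e l) p =
   (if m = l then (\<Sum>a<K. Psibar p a n * Psi p k a) else 0) - (if n = k then (\<Sum>a<K. Psibar p a l * Psi p m a) else 0)"
  by (simp add: delta_simps sum_subtractf sum_negf mult.commute)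

lemma br_BPhi[simp]: "pbr N K (\<lambda>p. Bm p m n) (\<lambda>p. \<Sum>e<K. Psi p k e * Psibar p e l) p = 0"
  by simp
lemma br_PhiB[simp]: "pbr N K (\<lambda>p. \<Sum>e<K. Psi p k e * Psibar p e l) (\<lambda>p. Bm p m n) p = 0"
  by simp

lemma br_XX: "m < N \<Longrightarrow> n < N \<Longrightarrow> k < N \<Longrightarrow> l < N \<Longrightarrow>
  pbr N K (\<lambda>p. Btilde K p m n / 2) (\<lambda>p. Btilde K p k l / 2) p = 0"
  unfolding Btilde_def
  apply (simp only: pbr_div_left pbr_div_right pbr_add_left pbr_add_right sm_add sm_sum sm_mult sm_Psi sm_Psibar sm_Bm sm_divc)
  apply (simp add: br_BB delta_simps sum_subtractf sum_negf mult.commute)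
  done



definition XX :: "nat \<Rightarrow> nat \<Rightarrow> nat \<Rightarrow> point \<Rightarrow> complex" where
  "XX K k l p = Btilde K p k l / 2"

lemma sm_XX[simp]: "sm (XX K k l)"
  using sm_Bt[of K k l] unfolding XX_def[abs_def] by simp

lemma XX_P: "m < N \<Longrightarrow> n < N \<Longrightarrow> i < N \<Longrightarrow> a < K \<Longrightarrow>
  pbr N K (XX K m n) (\<lambda>p. Psi p i a) p = (if n = i then - Psi p m a / 2 else 0)"
  using br_XP[of m N n i a K p] unfolding XX_def[abs_def] by simp

lemma XX_Q: "m < N \<Longrightarrow> n < N \<Longrightarrow> j < N \<Longrightarrow> b < K \<Longrightarrow>
  pbr N K (XX K m n) (\<lambda>p. Psibar p b j) p = (if m = j then Psibar p b n / 2 else 0)"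
  using br_XQ[of m N n j b K p] unfolding XX_def[abs_def] by simp

lemma XX_XX: "m < N \<Longrightarrow> n < N \<Longrightarrow> k < N \<Longrightarrow> l < N \<Longrightarrow>
  pbr N K (XX K m n) (XX K k l) p = 0"
  using br_XX[of m N n k l K p] unfolding XX_def[abs_def] by simp

definition Xp :: "nat \<Rightarrow> nat \<Rightarrow> nat \<Rightarrow> nat \<Rightarrow> nat \<Rightarrow> point \<Rightarrow> complex" where
  "Xp N K n i j = (\<lambda>p. mpow N (\<lambda>k l. Btilde K p k l / 2) n i j)"

lemma Xp_0: "Xp N K 0 i j = (\<lambda>p. if i = j then 1 else 0)"
  unfolding Xp_def by simp

lemma Xp_Suc: "Xp N K (Suc n) i j = (\<lambda>p. \<Sum>k<N. Xp N K n i k p * XX K k j p)"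
  unfolding Xp_def XX_def by (simp add: mmul_def)

lemma sm_Xp[simp]: "sm (Xp N K n i j)"
  by (induction n arbitrary: j) (simp_all add: Xp_0 Xp_Suc)

lemma Xp_add: "i < N \<Longrightarrow> j < N \<Longrightarrow> (\<Sum>k<N. Xp N K m i k p * Xp N K n k j p) = Xp N K (m + n) i j p"
proof (induction n arbitrary: j)
  case 0
  then show ?case by (simp add: Xp_0 delta_simps)
next
  case (Suc n)
  have "(\<Sum>k<N. Xp N K m i k p * Xp N K (Suc n) k j p)
      = (\<Sum>k<N. \<Sum>l<N. Xp N K m i k p * Xp N K n k l p * XX K l j p)"
    by (simp add: Xp_Suc sum_distrib_left mult.assoc)
  also have "\<dots> = (\<Sum>l<N. \<Sum>k<N. Xp N K m i k p * Xp N K n k l p * XX K l j p)"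
    by (rule sum.swap)
  also have "\<dots> = (\<Sum>l<N. (\<Sum>k<N. Xp N K m i k p * Xp N K n k l p) * XX K l j p)"
    by (simp add: sum_distrib_right)
  also have "\<dots> = (\<Sum>l<N. Xp N K (m + n) i l p * XX K l j p)"
    using Suc.prems by (intro sum.cong refl) (simp add: Suc.IH)
  also have "\<dots> = Xp N K (m + Suc n) i j p"
    by (simp add: Xp_Suc)
  finally show ?case .
qed

definition YY :: "nat \<Rightarrow> nat \<Rightarrow> nat \<Rightarrow> nat \<Rightarrow> nat \<Rightarrow> point \<Rightarrow> complex" where
  "YY N K n i b p = (\<Sum>j<N. Xp N K n i j p * Psi p j b)"
definition ZZ :: "nat \<Rightarrow> nat \<Rightarrow> nat \<Rightarrow> nat \<Rightarrow> nat \<Rightarrow> point \<Rightarrow> complex" where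
  "ZZ N K n a j p = (\<Sum>i<N. Psibar p a i * Xp N K n i j p)"
definition TT :: "nat \<Rightarrow> nat \<Rightarrow> nat \<Rightarrow> nat \<Rightarrow> nat \<Rightarrow> point \<Rightarrow> complex" where
  "TT N K n a b p = (\<Sum>i<N. \<Sum>j<N. Psibar p a i * Xp N K n i j p * Psi p j b)"

lemma Xp_Suc_pt: "Xp N K (Suc n) i j p = (\<Sum>k<N. Xp N K n i k p * XX K k j p)"
  by (simp add: Xp_Suc)

lemma Xp_0_pt: "Xp N K 0 i j p = (if i = j then 1 else 0)"
  by (simp add: Xp_0)

lemma br_XpP: "i < N \<Longrightarrow> j < N \<Longrightarrow> l < N \<Longrightarrow> d < K \<Longrightarrow>
  pbr N K (Xp N K n i j) (\<lambda>p. Psi p l d) p = - (\<Sum>q<n. YY N K q i d p * Xp N K (n - Suc q) l j p) / 2"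
proof (induction n arbitrary: j)
  case 0
  then show ?case by (simp add: Xp_0)
next
  case (Suc n)
  have "pbr N K (Xp N K (Suc n) i j) (\<lambda>p. Psi p l d) p =
     (\<Sum>k<N. Xp N K n i k p * (if j = l then - Psi p k d / 2 else 0)) -
     (\<Sum>k<N. XX K k j p * (\<Sum>q<n. YY N K q i d p * Xp N K (n - Suc q) l k p)) / 2"
    using Suc by (simp add: Xp_Suc XX_P sum_subtractf sum_divide_distrib sum_distrib_left)
  also have "(\<Sum>k<N. Xp N K n i k p * (if j = l then - Psi p k d / 2 else 0)) = (if j = l then - YY N K n i d p / 2 else 0)"
    by (simp add: YY_def sum_divide_distrib sum_negf)
  also have "(\<Sum>k<N. XX K k j p * (\<Sum>q<n. YY N K q i d p * Xp N K (n - Suc q) l k p))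
     = (\<Sum>q<n. YY N K q i d p * (\<Sum>k<N. Xp N K (n - Suc q) l k p * XX K k j p))"
    by (simp add: sum_distrib_left sum_distrib_right mult_ac sum.swap[of _ "{..<n}"])
  also have "\<dots> = (\<Sum>q<n. YY N K q i d p * Xp N K (n - q) l j p)"
    by (intro sum.cong refl) (simp add: Xp_Suc_pt[symmetric] Suc_diff_Suc)
  finally show ?case
    using Suc.prems by (simp add: Xp_0_pt algebra_simps diff_divide_distrib)
qed

lemma ZZ_Suc: "ZZ N K (Suc m) c j p = (\<Sum>k<N. ZZ N K m c k p * XX K k j p)"
proof -
  have "ZZ N K (Suc m) c j p = (\<Sum>i<N. \<Sum>k<N. Psibar p c i * Xp N K m i k p * XX K k j p)"
    unfolding ZZ_def Xp_Suc_pt by (simp add: sum_distrib_left mult.assoc)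
  also have "\<dots> = (\<Sum>k<N. \<Sum>i<N. Psibar p c i * Xp N K m i k p * XX K k j p)"
    by (rule sum.swap)
  also have "\<dots> = (\<Sum>k<N. ZZ N K m c k p * XX K k j p)"
    unfolding ZZ_def by (simp add: sum_distrib_right)
  finally show ?thesis .
qed

lemma ZZ_0: "j < N \<Longrightarrow> ZZ N K 0 c j p = Psibar p c j"
  unfolding ZZ_def by (simp add: Xp_0_pt delta_simps)

lemma YY_0: "j < N \<Longrightarrow> YY N K 0 j b p = Psi p j b"
  unfolding YY_def by (simp add: Xp_0_pt delta_simps)

lemma br_XpQ: "i < N \<Longrightarrow> j < N \<Longrightarrow> k < N \<Longrightarrow> c < K \<Longrightarrow>
  pbr N K (Xp N K n i j) (\<lambda>p. Psibar p c k) p = (\<Sum>q<n. Xp N K q i k p * ZZ N K (n - Suc q) c j p) / 2"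
proof (induction n arbitrary: j)
  case 0
  then show ?case by (simp add: Xp_0)
next
  case (Suc n)
  have "pbr N K (Xp N K (Suc n) i j) (\<lambda>p. Psibar p c k) p =
     (\<Sum>k'<N. Xp N K n i k' p * (if k' = k then Psibar p c j / 2 else 0)) +
     (\<Sum>k'<N. XX K k' j p * (\<Sum>q<n. Xp N K q i k p * ZZ N K (n - Suc q) c k' p)) / 2"
    using Suc by (simp add: Xp_Suc XX_Q sum.distrib sum_divide_distrib sum_distrib_left)
  also have "(\<Sum>k'<N. Xp N K n i k' p * (if k' = k then Psibar p c j / 2 else 0)) = Xp N K n i k p * ZZ N K 0 c j p / 2"
    using Suc.prems by (simp add: delta_simps ZZ_0)
  also have "(\<Sum>k'<N. XX K k' j p * (\<Sum>q<n. Xp N K q i k p * ZZ N K (n - Suc q) c k' p))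
     = (\<Sum>q<n. Xp N K q i k p * (\<Sum>k'<N. ZZ N K (n - Suc q) c k' p * XX K k' j p))"
    by (simp add: sum_distrib_left sum_distrib_right mult_ac sum.swap[of _ "{..<n}"])
  also have "\<dots> = (\<Sum>q<n. Xp N K q i k p * ZZ N K (n - q) c j p)"
    by (intro sum.cong refl) (simp add: ZZ_Suc[symmetric] Suc_diff_Suc)
  finally show ?case
    using Suc.prems by (simp add: algebra_simps add_divide_distrib)
qed

lemma br_XXXp: "k < N \<Longrightarrow> l < N \<Longrightarrow> i < N \<Longrightarrow> j < N \<Longrightarrow> pbr N K (XX K k l) (Xp N K m i j) p = 0"
proof (induction m arbitrary: j)
  case 0
  then show ?case by (simp add: Xp_0)
next
  case (Suc m)
  then show ?case by (simp add: Xp_Suc XX_XX)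
qed

lemma br_XpXp: "k < N \<Longrightarrow> l < N \<Longrightarrow> i < N \<Longrightarrow> j < N \<Longrightarrow> pbr N K (Xp N K n k l) (Xp N K m i j) p = 0"
proof (induction n arbitrary: l)
  case 0
  then show ?case by (simp add: Xp_0)
next
  case (Suc n)
  have "pbr N K (XX K k' l) (Xp N K m i j) p = 0" if "k' < N" for k'
    using that Suc.prems by (simp add: br_XXXp)
  moreover have "pbr N K (Xp N K m i j) (XX K k' l) p = 0" if "k' < N" for k'
    using that Suc.prems by (subst pbr_antisym) (simp add: br_XXXp)
  ultimately show ?case using Suc by (simp add: Xp_Suc)
qed



lemma sum_if0: "(\<Sum>j\<in>A. if P then f j else (0::complex)) = (if P then sum f A else 0)"
  by (cases P) simp_all

lemma sm_TT[simp]: "sm (TT N K n a b)"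
  unfolding TT_def[abs_def] by simp

lemma sum3_factor: "(\<Sum>i\<in>A. \<Sum>j\<in>B. x i * y j * (\<Sum>q\<in>C. F q i * G q j)) =
   (\<Sum>q\<in>C. (\<Sum>i\<in>A. x i * F q i) * (\<Sum>j\<in>B. G q j * y j))" for x y :: "nat \<Rightarrow> complex"
proof -
  have "(\<Sum>i\<in>A. \<Sum>j\<in>B. x i * y j * (\<Sum>q\<in>C. F q i * G q j)) = (\<Sum>i\<in>A. \<Sum>j\<in>B. \<Sum>q\<in>C. x i * F q i * (G q j * y j))"
    by (simp add: sum_distrib_left mult_ac)
  also have "\<dots> = (\<Sum>i\<in>A. \<Sum>q\<in>C. \<Sum>j\<in>B. x i * F q i * (G q j * y j))"
    by (intro sum.cong refl) (rule sum.swap)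
  also have "\<dots> = (\<Sum>q\<in>C. \<Sum>i\<in>A. \<Sum>j\<in>B. x i * F q i * (G q j * y j))"
    by (rule sum.swap)
  also have "\<dots> = (\<Sum>q\<in>C. (\<Sum>i\<in>A. x i * F q i) * (\<Sum>j\<in>B. G q j * y j))"
    by (simp only: sum_product)
  finally show ?thesis .
qed

lemma TT_fun: "TT N K n a b = (\<lambda>p. \<Sum>i<N. \<Sum>j<N. Psibar p a i * Xp N K n i j p * Psi p j b)"
  unfolding TT_def by simp

lemma TT_YY: "TT N K n a b p = (\<Sum>i<N. Psibar p a i * YY N K n i b p)"
  unfolding TT_def YY_def by (simp add: sum_distrib_left mult.assoc)

lemma br_TT_left: "sm h \<Longrightarrow> pbr N K (TT N K r a b) h p =
   (\<Sum>i<N. \<Sum>j<N. Psibar p a i * Xp N K r i j p * pbr N K (\<lambda>p. Psi p j b) h p)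
 + (\<Sum>i<N. \<Sum>j<N. Psibar p a i * Psi p j b * pbr N K (Xp N K r i j) h p)
 + (\<Sum>i<N. \<Sum>j<N. Xp N K r i j p * Psi p j b * pbr N K (\<lambda>p. Psibar p a i) h p)"
  unfolding TT_fun[of N K r a b] by (simp add: sum.distrib algebra_simps)

lemma YY_Xp: "YY N K n l b p = (\<Sum>j<N. Xp N K n l j p * Psi p j b)"
  by (simp add: YY_def)

lemma br_TP: "a < K \<Longrightarrow> b < K \<Longrightarrow> d < K \<Longrightarrow> l < N \<Longrightarrow>
  pbr N K (TT N K r a b) (\<lambda>p. Psi p l d) p =
   - (if a = d then YY N K r l b p else 0) - (\<Sum>q<r. TT N K q a d p * YY N K (r - Suc q) l b p) / 2"
proof -
  assume as: "a < K" "b < K" "d < K" "l < N"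
  have t2: "(\<Sum>i<N. \<Sum>j<N. Psibar p a i * Psi p j b * pbr N K (Xp N K r i j) (\<lambda>p. Psi p l d) p)
     = - (\<Sum>q<r. TT N K q a d p * YY N K (r - Suc q) l b p) / 2"
  proof -
    have "(\<Sum>i<N. \<Sum>j<N. Psibar p a i * Psi p j b * pbr N K (Xp N K r i j) (\<lambda>p. Psi p l d) p)
      = - (\<Sum>i<N. \<Sum>j<N. Psibar p a i * Psi p j b * (\<Sum>q<r. YY N K q i d p * Xp N K (r - Suc q) l j p)) / 2"
      using as by (simp add: br_XpP sum_negf sum_divide_distrib sum_distrib_left)
    also have "(\<Sum>i<N. \<Sum>j<N. Psibar p a i * Psi p j b * (\<Sum>q<r. YY N K q i d p * Xp N K (r - Suc q) l j p))
       = (\<Sum>q<r. TT N K q a d p * YY N K (r - Suc q) l b p)"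
      by (simp only: sum3_factor TT_YY[symmetric] YY_Xp[symmetric])
    finally show ?thesis .
  qed
  have t3: "(\<Sum>i<N. \<Sum>j<N. Xp N K r i j p * Psi p j b * pbr N K (\<lambda>p. Psibar p a i) (\<lambda>p. Psi p l d) p)
     = - (if a = d then YY N K r l b p else 0)"
    using as by (simp add: delta_simps sum_if0 YY_def sum_negf)
  show ?thesis
    by (simp only: br_TT_left[OF sm_Psi] t2 t3 br_PP) simp
qed

lemma TT_ZZ: "TT N K n a b p = (\<Sum>j<N. ZZ N K n a j p * Psi p j b)"
proof -
  have "TT N K n a b p = (\<Sum>j<N. \<Sum>i<N. Psibar p a i * Xp N K n i j p * Psi p j b)"
    unfolding TT_def by (rule sum.swap)
  then show ?thesis unfolding ZZ_def by (simp add: sum_distrib_right)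
qed

lemma br_TQ: "a < K \<Longrightarrow> b < K \<Longrightarrow> c < K \<Longrightarrow> k < N \<Longrightarrow>
  pbr N K (TT N K r a b) (\<lambda>p. Psibar p c k) p =
   (if b = c then ZZ N K r a k p else 0) + (\<Sum>q<r. ZZ N K q a k p * TT N K (r - Suc q) c b p) / 2"
proof -
  assume as: "a < K" "b < K" "c < K" "k < N"
  have t1: "(\<Sum>i<N. \<Sum>j<N. Psibar p a i * Xp N K r i j p * pbr N K (\<lambda>p. Psi p j b) (\<lambda>p. Psibar p c k) p)
     = (if b = c then ZZ N K r a k p else 0)"
    using as by (simp add: delta_simps sum_if0 ZZ_def)
  have t2: "(\<Sum>i<N. \<Sum>j<N. Psibar p a i * Psi p j b * pbr N K (Xp N K r i j) (\<lambda>p. Psibar p c k) p)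
     = (\<Sum>q<r. ZZ N K q a k p * TT N K (r - Suc q) c b p) / 2"
  proof -
    have "(\<Sum>i<N. \<Sum>j<N. Psibar p a i * Psi p j b * pbr N K (Xp N K r i j) (\<lambda>p. Psibar p c k) p)
      = (\<Sum>i<N. \<Sum>j<N. Psibar p a i * Psi p j b * (\<Sum>q<r. Xp N K q i k p * ZZ N K (r - Suc q) c j p)) / 2"
      using as by (simp add: br_XpQ sum_divide_distrib sum_distrib_left)
    also have "(\<Sum>i<N. \<Sum>j<N. Psibar p a i * Psi p j b * (\<Sum>q<r. Xp N K q i k p * ZZ N K (r - Suc q) c j p))
       = (\<Sum>q<r. ZZ N K q a k p * TT N K (r - Suc q) c b p)"
      by (simp only: sum3_factor ZZ_def[symmetric] TT_ZZ[symmetric])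
    finally show ?thesis .
  qed
  show ?thesis
    by (simp only: br_TT_left[OF sm_Psibar] t1 t2 br_QQ) simp
qed

lemma sum2_pull: "(\<Sum>i\<in>A. \<Sum>j\<in>B. M i j * (\<Sum>q\<in>C. c q * G q i j)) = (\<Sum>q\<in>C. c q * (\<Sum>i\<in>A. \<Sum>j\<in>B. M i j * G q i j))"
  for M :: "nat \<Rightarrow> nat \<Rightarrow> complex"
proof -
  have "(\<Sum>i\<in>A. \<Sum>j\<in>B. M i j * (\<Sum>q\<in>C. c q * G q i j)) = (\<Sum>i\<in>A. \<Sum>j\<in>B. \<Sum>q\<in>C. c q * (M i j * G q i j))"
    by (simp add: sum_distrib_left mult_ac)
  also have "\<dots> = (\<Sum>i\<in>A. \<Sum>q\<in>C. \<Sum>j\<in>B. c q * (M i j * G q i j))"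
    by (intro sum.cong refl) (rule sum.swap)
  also have "\<dots> = (\<Sum>q\<in>C. \<Sum>i\<in>A. \<Sum>j\<in>B. c q * (M i j * G q i j))"
    by (rule sum.swap)
  also have "\<dots> = (\<Sum>q\<in>C. c q * (\<Sum>i\<in>A. \<Sum>j\<in>B. M i j * G q i j))"
    by (simp add: sum_distrib_left)
  finally show ?thesis .
qed

lemma ZZ_add: "l < N \<Longrightarrow> (\<Sum>i<N. \<Sum>j<N. Psibar p a i * Xp N K m i j p * Xp N K n j l p) = ZZ N K (m + n) a l p"
proof -
  assume l: "l < N"
  have "(\<Sum>i<N. \<Sum>j<N. Psibar p a i * Xp N K m i j p * Xp N K n j l p) = (\<Sum>i<N. Psibar p a i * (\<Sum>j<N. Xp N K m i j p * Xp N K n j l p))"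
    by (simp add: sum_distrib_left mult.assoc)
  also have "\<dots> = (\<Sum>i<N. Psibar p a i * Xp N K (m + n) i l p)"
    using l by (intro sum.cong refl) (simp add: Xp_add)
  finally show ?thesis unfolding ZZ_def .
qed

lemma YY_add: "k < N \<Longrightarrow> (\<Sum>i<N. \<Sum>j<N. Xp N K m k i p * Xp N K n i j p * Psi p j b) = YY N K (m + n) k b p"
proof -
  assume k: "k < N"
  have "(\<Sum>i<N. \<Sum>j<N. Xp N K m k i p * Xp N K n i j p * Psi p j b) = (\<Sum>j<N. \<Sum>i<N. Xp N K m k i p * Xp N K n i j p * Psi p j b)"
    by (rule sum.swap)
  also have "\<dots> = (\<Sum>j<N. (\<Sum>i<N. Xp N K m k i p * Xp N K n i j p) * Psi p j b)"
    by (simp add: sum_distrib_right)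
  also have "\<dots> = (\<Sum>j<N. Xp N K (m + n) k j p * Psi p j b)"
    using k by (intro sum.cong refl) (simp add: Xp_add)
  finally show ?thesis unfolding YY_def .
qed

lemma br_TXp: "a < K \<Longrightarrow> b < K \<Longrightarrow> k < N \<Longrightarrow> l < N \<Longrightarrow>
  pbr N K (TT N K r a b) (Xp N K s k l) p =
   (\<Sum>q<s. YY N K q k b p * ZZ N K (r + (s - Suc q)) a l p) / 2
 - (\<Sum>q<s. ZZ N K (s - Suc q) a l p * YY N K (q + r) k b p) / 2"
proof -
  assume as: "a < K" "b < K" "k < N" "l < N"
  have t1: "(\<Sum>i<N. \<Sum>j<N. Psibar p a i * Xp N K r i j p * pbr N K (\<lambda>p. Psi p j b) (Xp N K s k l) p)
     = (\<Sum>q<s. YY N K q k b p * ZZ N K (r + (s - Suc q)) a l p) / 2"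
  proof -
    have "(\<Sum>i<N. \<Sum>j<N. Psibar p a i * Xp N K r i j p * pbr N K (\<lambda>p. Psi p j b) (Xp N K s k l) p)
      = (\<Sum>i<N. \<Sum>j<N. Psibar p a i * Xp N K r i j p * (\<Sum>q<s. YY N K q k b p * Xp N K (s - Suc q) j l p)) / 2"
      using as by (subst pbr_antisym) (simp add: br_XpP sum_divide_distrib sum_distrib_left)
    also have "\<dots> = (\<Sum>q<s. YY N K q k b p * ZZ N K (r + (s - Suc q)) a l p) / 2"
      using as by (simp only: sum2_pull ZZ_add)
    finally show ?thesis .
  qed
  have t2: "(\<Sum>i<N. \<Sum>j<N. Psibar p a i * Psi p j b * pbr N K (Xp N K r i j) (Xp N K s k l) p) = 0"
    using as by (simp add: br_XpXp)
  have t3: "(\<Sum>i<N. \<Sum>j<N. Xp N K r i j p * Psi p j b * pbr N K (\<lambda>p. Psibar p a i) (Xp N K s k l) p)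
     = - (\<Sum>q<s. ZZ N K (s - Suc q) a l p * YY N K (q + r) k b p) / 2"
  proof -
    have "(\<Sum>i<N. \<Sum>j<N. Xp N K r i j p * Psi p j b * pbr N K (\<lambda>p. Psibar p a i) (Xp N K s k l) p)
      = - (\<Sum>i<N. \<Sum>j<N. Xp N K r i j p * Psi p j b * (\<Sum>q<s. ZZ N K (s - Suc q) a l p * Xp N K q k i p)) / 2"
      using as by (subst pbr_antisym) (simp add: br_XpQ sum_divide_distrib sum_distrib_left sum_negf mult_ac)
    also have "(\<Sum>i<N. \<Sum>j<N. Xp N K r i j p * Psi p j b * (\<Sum>q<s. ZZ N K (s - Suc q) a l p * Xp N K q k i p))
       = (\<Sum>q<s. ZZ N K (s - Suc q) a l p * YY N K (q + r) k b p)"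
    proof -
      have "(\<Sum>i<N. \<Sum>j<N. Xp N K r i j p * Psi p j b * (\<Sum>q<s. ZZ N K (s - Suc q) a l p * Xp N K q k i p))
        = (\<Sum>q<s. ZZ N K (s - Suc q) a l p * (\<Sum>i<N. \<Sum>j<N. Xp N K r i j p * Psi p j b * Xp N K q k i p))"
        by (rule sum2_pull)
      also have "\<dots> = (\<Sum>q<s. ZZ N K (s - Suc q) a l p * YY N K (q + r) k b p)"
      proof (intro sum.cong refl)
        fix q
        have "(\<Sum>i<N. \<Sum>j<N. Xp N K q k i p * Xp N K r i j p * Psi p j b) = YY N K (q + r) k b p"
          using as(3) by (rule YY_add)
        then show "ZZ N K (s - Suc q) a l p * (\<Sum>i<N. \<Sum>j<N. Xp N K r i j p * Psi p j b * Xp N K q k i p)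
          = ZZ N K (s - Suc q) a l p * YY N K (q + r) k b p"
          by (simp add: mult_ac)
      qed
      finally show ?thesis .
    qed
    finally show ?thesis .
  qed
  show ?thesis
    by (simp only: br_TT_left[OF sm_Xp] t1 t2 t3) simp
qed



lemma br_TT_right: "sm h \<Longrightarrow> pbr N K h (TT N K s c d) p =
   (\<Sum>k<N. \<Sum>l<N. Psibar p c k * Xp N K s k l p * pbr N K h (\<lambda>p. Psi p l d) p)
 + (\<Sum>k<N. \<Sum>l<N. Psibar p c k * Psi p l d * pbr N K h (Xp N K s k l) p)
 + (\<Sum>k<N. \<Sum>l<N. Xp N K s k l p * Psi p l d * pbr N K h (\<lambda>p. Psibar p c k) p)"
  unfolding TT_fun[of N K s c d] by (simp add: sum.distrib algebra_simps)

lemma TTc: "(\<Sum>k<N. \<Sum>l<N. Psibar p c k * Xp N K m k l p * YY N K n l b p) = TT N K (m + n) c b p"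
proof -
  have "(\<Sum>k<N. \<Sum>l<N. Psibar p c k * Xp N K m k l p * YY N K n l b p)
     = (\<Sum>k<N. Psibar p c k * (\<Sum>l<N. \<Sum>j<N. Xp N K m k l p * Xp N K n l j p * Psi p j b))"
    by (simp add: YY_def sum_distrib_left mult_ac)
  also have "\<dots> = (\<Sum>k<N. Psibar p c k * YY N K (m + n) k b p)"
    by (intro sum.cong refl) (simp add: YY_add)
  finally show ?thesis by (simp add: TT_YY)
qed

lemma TTz: "(\<Sum>k<N. \<Sum>l<N. Xp N K s k l p * Psi p l d * ZZ N K m a k p) = TT N K (m + s) a d p"
proof -
  have "(\<Sum>k<N. \<Sum>l<N. Xp N K s k l p * Psi p l d * ZZ N K m a k p)
     = (\<Sum>l<N. \<Sum>k<N. Xp N K s k l p * Psi p l d * ZZ N K m a k p)"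
    by (rule sum.swap)
  also have "\<dots> = (\<Sum>l<N. (\<Sum>k<N. ZZ N K m a k p * Xp N K s k l p) * Psi p l d)"
    by (simp add: sum_distrib_right sum_distrib_left mult_ac)
  also have "\<dots> = (\<Sum>l<N. ZZ N K (m + s) a l p * Psi p l d)"
  proof (intro sum.cong refl)
    fix l assume "l \<in> {..<N}"
    then have l: "l < N" by simp
    have "(\<Sum>k<N. ZZ N K m a k p * Xp N K s k l p) = (\<Sum>k<N. \<Sum>i<N. Psibar p a i * Xp N K m i k p * Xp N K s k l p)"
      by (simp add: ZZ_def sum_distrib_right)
    also have "\<dots> = (\<Sum>i<N. \<Sum>k<N. Psibar p a i * Xp N K m i k p * Xp N K s k l p)"
      by (rule sum.swap)
    also have "\<dots> = ZZ N K (m + s) a l p"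
      using l by (rule ZZ_add)
    finally show "(\<Sum>k<N. ZZ N K m a k p * Xp N K s k l p) * Psi p l d = ZZ N K (m + s) a l p * Psi p l d"
      by simp
  qed
  finally show ?thesis by (simp add: TT_ZZ)
qed

lemma R1: "a < K \<Longrightarrow> b < K \<Longrightarrow> d < K \<Longrightarrow>
  (\<Sum>k<N. \<Sum>l<N. Psibar p c k * Xp N K s k l p * pbr N K (TT N K r a b) (\<lambda>p. Psi p l d) p)
  = - (if a = d then TT N K (s + r) c b p else 0) - (\<Sum>q<r. TT N K q a d p * TT N K (s + (r - Suc q)) c b p) / 2"
proof -
  assume as: "a < K" "b < K" "d < K"
  have "(\<Sum>k<N. \<Sum>l<N. Psibar p c k * Xp N K s k l p * pbr N K (TT N K r a b) (\<lambda>p. Psi p l d) p)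
     = (\<Sum>k<N. \<Sum>l<N. - (Psibar p c k * Xp N K s k l p * (if a = d then YY N K r l b p else 0))
          - Psibar p c k * Xp N K s k l p * (\<Sum>q<r. TT N K q a d p * YY N K (r - Suc q) l b p) / 2)"
    using as by (intro sum.cong refl) (simp add: br_TP algebra_simps)
  also have "\<dots> = - (\<Sum>k<N. \<Sum>l<N. Psibar p c k * Xp N K s k l p * (if a = d then YY N K r l b p else 0))
      - (\<Sum>k<N. \<Sum>l<N. Psibar p c k * Xp N K s k l p * (\<Sum>q<r. TT N K q a d p * YY N K (r - Suc q) l b p)) / 2"
    by (simp only: sum_subtractf sum_negf sum_divide_distrib)
  also have "(\<Sum>k<N. \<Sum>l<N. Psibar p c k * Xp N K s k l p * (if a = d then YY N K r l b p else 0))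
     = (if a = d then TT N K (s + r) c b p else 0)"
    by (cases "a = d") (simp_all add: TTc)
  also have "(\<Sum>k<N. \<Sum>l<N. Psibar p c k * Xp N K s k l p * (\<Sum>q<r. TT N K q a d p * YY N K (r - Suc q) l b p))
     = (\<Sum>q<r. TT N K q a d p * TT N K (s + (r - Suc q)) c b p)"
    by (simp only: sum2_pull TTc)
  finally show ?thesis .
qed

lemma R2: "a < K \<Longrightarrow> b < K \<Longrightarrow>
  (\<Sum>k<N. \<Sum>l<N. Psibar p c k * Psi p l d * pbr N K (TT N K r a b) (Xp N K s k l) p)
  = (\<Sum>q<s. TT N K q c b p * TT N K (r + (s - Suc q)) a d p) / 2
  - (\<Sum>q<s. TT N K (s - Suc q) a d p * TT N K (q + r) c b p) / 2"
proof -
  assume as: "a < K" "b < K"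
  have "(\<Sum>k<N. \<Sum>l<N. Psibar p c k * Psi p l d * pbr N K (TT N K r a b) (Xp N K s k l) p)
     = (\<Sum>k<N. \<Sum>l<N. Psibar p c k * Psi p l d * (\<Sum>q<s. YY N K q k b p * ZZ N K (r + (s - Suc q)) a l p) / 2
          - Psibar p c k * Psi p l d * (\<Sum>q<s. YY N K (q + r) k b p * ZZ N K (s - Suc q) a l p) / 2)"
    using as by (intro sum.cong refl) (simp add: br_TXp algebra_simps)
  also have "\<dots> = (\<Sum>k<N. \<Sum>l<N. Psibar p c k * Psi p l d * (\<Sum>q<s. YY N K q k b p * ZZ N K (r + (s - Suc q)) a l p)) / 2
      - (\<Sum>k<N. \<Sum>l<N. Psibar p c k * Psi p l d * (\<Sum>q<s. YY N K (q + r) k b p * ZZ N K (s - Suc q) a l p)) / 2"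
    by (simp only: sum_subtractf sum_divide_distrib)
  also have "(\<Sum>k<N. \<Sum>l<N. Psibar p c k * Psi p l d * (\<Sum>q<s. YY N K q k b p * ZZ N K (r + (s - Suc q)) a l p))
     = (\<Sum>q<s. TT N K q c b p * TT N K (r + (s - Suc q)) a d p)"
    by (simp only: sum3_factor TT_YY[symmetric] TT_ZZ[symmetric])
  also have "(\<Sum>k<N. \<Sum>l<N. Psibar p c k * Psi p l d * (\<Sum>q<s. YY N K (q + r) k b p * ZZ N K (s - Suc q) a l p))
     = (\<Sum>q<s. TT N K (s - Suc q) a d p * TT N K (q + r) c b p)"
  proof -
    have "(\<Sum>k<N. \<Sum>l<N. Psibar p c k * Psi p l d * (\<Sum>q<s. YY N K (q + r) k b p * ZZ N K (s - Suc q) a l p))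
     = (\<Sum>q<s. TT N K (q + r) c b p * TT N K (s - Suc q) a d p)"
      by (simp only: sum3_factor TT_YY[symmetric] TT_ZZ[symmetric])
    then show ?thesis by (simp add: mult.commute)
  qed
  finally show ?thesis .
qed

lemma R3: "a < K \<Longrightarrow> b < K \<Longrightarrow> c < K \<Longrightarrow>
  (\<Sum>k<N. \<Sum>l<N. Xp N K s k l p * Psi p l d * pbr N K (TT N K r a b) (\<lambda>p. Psibar p c k) p)
  = (if b = c then TT N K (r + s) a d p else 0) + (\<Sum>q<r. TT N K (q + s) a d p * TT N K (r - Suc q) c b p) / 2"
proof -
  assume as: "a < K" "b < K" "c < K"
  have "(\<Sum>k<N. \<Sum>l<N. Xp N K s k l p * Psi p l d * pbr N K (TT N K r a b) (\<lambda>p. Psibar p c k) p)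
     = (\<Sum>k<N. \<Sum>l<N. Xp N K s k l p * Psi p l d * (if b = c then ZZ N K r a k p else 0)
          + Xp N K s k l p * Psi p l d * (\<Sum>q<r. TT N K (r - Suc q) c b p * ZZ N K q a k p) / 2)"
    using as by (intro sum.cong refl) (simp add: br_TQ algebra_simps)
  also have "\<dots> = (\<Sum>k<N. \<Sum>l<N. Xp N K s k l p * Psi p l d * (if b = c then ZZ N K r a k p else 0))
      + (\<Sum>k<N. \<Sum>l<N. Xp N K s k l p * Psi p l d * (\<Sum>q<r. TT N K (r - Suc q) c b p * ZZ N K q a k p)) / 2"
    by (simp only: sum.distrib sum_divide_distrib)
  also have "(\<Sum>k<N. \<Sum>l<N. Xp N K s k l p * Psi p l d * (if b = c then ZZ N K r a k p else 0))
     = (if b = c then TT N K (r + s) a d p else 0)"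
    by (cases "b = c") (simp_all add: TTz)
  also have "(\<Sum>k<N. \<Sum>l<N. Xp N K s k l p * Psi p l d * (\<Sum>q<r. TT N K (r - Suc q) c b p * ZZ N K q a k p))
     = (\<Sum>q<r. TT N K (r - Suc q) c b p * TT N K (q + s) a d p)"
    by (simp only: sum2_pull TTz)
  finally show ?thesis by (simp add: mult.commute)
qed

lemma br_TT: "a < K \<Longrightarrow> b < K \<Longrightarrow> c < K \<Longrightarrow> d < K \<Longrightarrow>
  pbr N K (TT N K r a b) (TT N K s c d) p =
    (if b = c then TT N K (r + s) a d p else 0) - (if a = d then TT N K (s + r) c b p else 0)
  + (\<Sum>q<r. TT N K (q + s) a d p * TT N K (r - Suc q) c b p) / 2
  - (\<Sum>q<r. TT N K q a d p * TT N K (s + (r - Suc q)) c b p) / 2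
  + (\<Sum>q<s. TT N K q c b p * TT N K (r + (s - Suc q)) a d p) / 2
  - (\<Sum>q<s. TT N K (s - Suc q) a d p * TT N K (q + r) c b p) / 2"
  by (simp only: br_TT_right[OF sm_TT] R1 R2 R3) (simp add: algebra_simps)



definition SS :: "(nat \<Rightarrow> nat \<Rightarrow> complex) \<Rightarrow> nat \<Rightarrow> nat \<Rightarrow> complex" where
  "SS h t n = (\<Sum>i<n. h i (t - i))"

lemma G1:
  fixes h :: "nat \<Rightarrow> nat \<Rightarrow> complex"
  shows "(\<Sum>q<r. h (q + s) (r - Suc q)) = SS h (r + s - 1) (r + s) - SS h (r + s - 1) s"
proof -
  let ?g = "\<lambda>i. h i (r + s - 1 - i)"
  have "(\<Sum>q<r. h (q + s) (r - Suc q)) = (\<Sum>q\<in>{0..<r}. ?g (q + s))"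
    by (intro sum.cong) auto
  also have "\<dots> = sum ?g {0 + s..<r + s}"
    by (rule sum.shift_bounds_nat_ivl[symmetric])
  also have "\<dots> = sum ?g {0..<r + s} - sum ?g {0..<s}"
    using sum.atLeastLessThan_concat[of 0 s "r + s" ?g] by (simp add: eq_diff_eq add.commute)
  finally show ?thesis unfolding SS_def atLeast0LessThan .
qed

lemma G2:
  fixes h :: "nat \<Rightarrow> nat \<Rightarrow> complex"
  shows "(\<Sum>q<r. h q (s + (r - Suc q))) = SS h (r + s - 1) r"
  unfolding SS_def by (intro sum.cong) (auto simp: ac_simps)

lemma G3:
  fixes h :: "nat \<Rightarrow> nat \<Rightarrow> complex"
  shows "(\<Sum>q<s. h (r + (s - Suc q)) q) = SS h (r + s - 1) (r + s) - SS h (r + s - 1) r"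
proof -
  have "(\<Sum>q<s. h (r + (s - Suc q)) q) = (\<Sum>q<s. (\<lambda>i. h (i + r) (s - Suc i)) (s - Suc q))"
    by (intro sum.cong) (auto simp: Suc_diff_Suc add.commute)
  also have "\<dots> = (\<Sum>q<s. h (q + r) (s - Suc q))"
    by (rule sum.nat_diff_reindex)
  also have "\<dots> = SS h (s + r - 1) (s + r) - SS h (s + r - 1) r"
    by (rule G1)
  finally show ?thesis by (simp add: add.commute)
qed

lemma G4:
  fixes h :: "nat \<Rightarrow> nat \<Rightarrow> complex"
  shows "(\<Sum>q<s. h (s - Suc q) (q + r)) = SS h (r + s - 1) s"
proof -
  have "(\<Sum>q<s. h (s - Suc q) (q + r)) = (\<Sum>q<s. (\<lambda>i. h i (r + s - 1 - i)) (s - Suc q))"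
    by (intro sum.cong) (auto simp: ac_simps)
  also have "\<dots> = SS h (r + s - 1) s"
    unfolding SS_def by (rule sum.nat_diff_reindex)
  finally show ?thesis .
qed

lemma SS_Suc: "SS h t (Suc n) = SS h t n + h n (t - n)"
  unfolding SS_def by simp

lemma tele:
  fixes h :: "nat \<Rightarrow> nat \<Rightarrow> complex"
  shows "((\<Sum>q<Suc r. h (q + s) (Suc r - Suc q)) - (\<Sum>q<Suc r. h q (s + (Suc r - Suc q)))
   + (\<Sum>q<s. h (Suc r + (s - Suc q)) q) - (\<Sum>q<s. h (s - Suc q) (q + Suc r)))
 - ((\<Sum>q<r. h (q + Suc s) (r - Suc q)) - (\<Sum>q<r. h q (Suc s + (r - Suc q)))
   + (\<Sum>q<Suc s. h (r + (Suc s - Suc q)) q) - (\<Sum>q<Suc s. h (Suc s - Suc q) (q + r)))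
 = 2 * (h s r - h r s)"
proof -
  have e1: "Suc r + s - 1 = r + s" "r + Suc s - 1 = r + s" "Suc r + s = Suc (r + s)" "r + Suc s = Suc (r + s)" by simp_all
  show ?thesis
    unfolding G1 G2 G3 G4 e1
    by (simp add: SS_Suc algebra_simps)
qed

lemma Tpull_nat: "Tpull N K (int m) a b = TT N K m a b"
  unfolding Tpull_def[abs_def] TT_def[abs_def] Xp_def by simp

lemma Tpull_0: "Tpull N K 0 a b = TT N K 0 a b"
  using Tpull_nat[of N K 0 a b] by simp

lemma Tpull_neg: "n < 0 \<Longrightarrow> Tpull N K n a b = (\<lambda>p. if n = -1 \<and> a = b then 1 else 0)"
  unfolding Tpull_def[abs_def] by auto

lemma br_TT_h: "a < K \<Longrightarrow> b < K \<Longrightarrow> c < K \<Longrightarrow> d < K \<Longrightarrow>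
  pbr N K (TT N K r a b) (TT N K s c d) p =
    (if b = c then TT N K (r + s) a d p else 0) - (if a = d then TT N K (s + r) c b p else 0)
  + ((\<Sum>q<r. (\<lambda>i j. TT N K i a d p * TT N K j c b p) (q + s) (r - Suc q))
  - (\<Sum>q<r. (\<lambda>i j. TT N K i a d p * TT N K j c b p) q (s + (r - Suc q)))
  + (\<Sum>q<s. (\<lambda>i j. TT N K i a d p * TT N K j c b p) (r + (s - Suc q)) q)
  - (\<Sum>q<s. (\<lambda>i j. TT N K i a d p * TT N K j c b p) (s - Suc q) (q + r))) / 2"
proof -
  assume as: "a < K" "b < K" "c < K" "d < K"
  have "(\<Sum>q<s. TT N K q c b p * TT N K (r + (s - Suc q)) a d p) = (\<Sum>q<s. (\<lambda>i j. TT N K i a d p * TT N K j c b p) (r + (s - Suc q)) q)"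
    by (simp add: mult.commute)
  then show ?thesis using br_TT[OF as, of N r s p] by (simp only: diff_divide_distrib add_divide_distrib) simp
qed

lemma alg: "(x::complex) - y = 2 * z \<Longrightarrow> d1 = d2 \<Longrightarrow> e1 = e2 \<Longrightarrow> (d1 - e1 + x / 2) - (d2 - e2 + y / 2) = z"
  by (simp add: field_simps)

theorem mainTheorem12:
  fixes N K :: nat and a b c d :: nat and r s :: int and p :: point
  assumes "a < K" "b < K" "c < K" "d < K" "r \<ge> -1" "s \<ge> -1"
  shows "pbr N K (Tpull N K r a b) (Tpull N K (s - 1) c d) p
           - pbr N K (Tpull N K (r - 1) a b) (Tpull N K s c d) p
         = Tpull N K (s - 1) a d p * Tpull N K (r - 1) c b p
           - Tpull N K (r - 1) a d p * Tpull N K (s - 1) c b p"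
proof -
  have as: "a < K" "b < K" "c < K" "d < K" using assms by simp_all
  have rc: "r = -1 \<or> r = int (nat r)" using assms(5) by auto
  have sc: "s = -1 \<or> s = int (nat s)" using assms(6) by auto
  show ?thesis
  proof (cases "r = -1")
    case True
    then show ?thesis by (simp add: Tpull_neg)
  next
    case rF: False
    then obtain r' where r: "r = int r'" using rc by blast
    show ?thesis
    proof (cases "s = -1")
      case True
      then show ?thesis by (simp add: Tpull_neg)
    next
      case False
      then obtain s' where s: "s = int s'" using sc by blast
      show ?thesis
      proof (cases r')
        case 0
        note r0 = this
        show ?thesis
        proof (cases s')
          case 0
          then show ?thesis using r r0 s by (simp add: Tpull_neg Tpull_nat Tpull_0)
        next
          case (Suc s'')
          have s1: "s - 1 = int s''" using s Suc by simp
          show ?thesis using r r0 s Suc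
            by (simp only: s1) (simp add: Tpull_neg Tpull_nat Tpull_0 br_TT[OF as] mult.commute)
        qed
      next
        case (Suc r'')
        have r1: "r - 1 = int r''" using r Suc by simp
        show ?thesis
        proof (cases s')
          case 0
          then show ?thesis using r s Suc
            by (simp only: r1) (simp add: Tpull_neg Tpull_nat Tpull_0 br_TT[OF as] mult.commute)
        next
          case sS: (Suc s'')
          have s1: "s - 1 = int s''" using s sS by simp
          let ?h = "\<lambda>i j. TT N K i a d p * TT N K j c b p"
          have T: "((\<Sum>q<Suc r''. ?h (q + s'') (Suc r'' - Suc q)) - (\<Sum>q<Suc r''. ?h q (s'' + (Suc r'' - Suc q)))
             + (\<Sum>q<s''. ?h (Suc r'' + (s'' - Suc q)) q) - (\<Sum>q<s''. ?h (s'' - Suc q) (q + Suc r'')))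
           - ((\<Sum>q<r''. ?h (q + Suc s'') (r'' - Suc q)) - (\<Sum>q<r''. ?h q (Suc s'' + (r'' - Suc q)))
             + (\<Sum>q<Suc s''. ?h (r'' + (Suc s'' - Suc q)) q) - (\<Sum>q<Suc s''. ?h (Suc s'' - Suc q) (q + r'')))
           = 2 * (?h s'' r'' - ?h r'' s'')"
            by (rule tele)
          have "pbr N K (Tpull N K r a b) (Tpull N K (s - 1) c d) p
           - pbr N K (Tpull N K (r - 1) a b) (Tpull N K s c d) p
           = pbr N K (TT N K (Suc r'') a b) (TT N K s'' c d) p - pbr N K (TT N K r'' a b) (TT N K (Suc s'') c d) p"
            unfolding r1 s1 unfolding r s Suc sS Tpull_nat ..
          also have "\<dots> = ?h s'' r'' - ?h r'' s''"
            unfolding br_TT_h[OF as]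
            by (rule alg[OF T]) simp_all
          finally show ?thesis
            unfolding r1 s1 Tpull_nat by simp
        qed
      qed
    qed
  qed
qed

end
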